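(* Let $r\ge 1$ and $K\ge1$ be integers, $\beta_1,\beta_2>0$ and $\theta_1,\theta_2>0$. Let $\zeta=(1,0,0)$, $\eta=(0,0,1)$, $v=(0,0,1)$, $v'=(0,1,0)$, and for $i=1,\dots,r$ let $k_i=2^{i-1}K\zeta\in\mathbb{Z}^3$ and $k_i'=k_i+\eta$. Define the vector fields on $\mathbb{R}^3$ \[ u_0(x)=r^{-\beta_1}\sum_{i=1}^r|k_i|^{\theta_1}v\cos(k_i\cdot x),\qquad b_0(x)=r^{-\beta_2}\sum_{i=1}^r|k_i'|^{\theta_2}v'\cos(k_i'\cdot x). \] Then \[ \|u_0\|_{\dot B^{-\theta_1}_{\infty,\infty}}\lesssim r^{-\beta_1},\qquad \|b_0\|_{\dot B^{-\theta_2}_{\infty,\infty}}\lesssim r^{-\beta_2}, \] with implicit constants independent of $r$ and $K$.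
   Context: For $s>0$, $\|f\|_{\dot B^{-s}_{\infty,\infty}}=\sup_{t>0}t^{\frac{s}{2\alpha}}\|e^{-t(-\Delta)^{\alpha}}f\|_{L^\infty}$ for a fixed $\alpha>0$ (different $\alpha$ give equivalent norms), where $e^{-t(-\Delta)^\alpha}$ is the fractional heat semigroup (Fourier multiplier $e^{-t|\xi|^{2\alpha}}$). *)

theory Defs
  imports "HOL-Analysis.Analysis"
begin

type_synonym vec3 = "real ^ 3"

definition trig :: "(vec3 \<times> vec3) list \<Rightarrow> vec3 \<Rightarrow> vec3" where
  "trig ps x = (\<Sum>(a, k) \<leftarrow> ps. cos (k \<bullet> x) *\<^sub>R a)"

text \<open>Fractional heat semigroup e^{-t(-Delta)^alpha}: Fourier multiplier e^{-t|xi|^{2 alpha}},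
  which acts on the mode cos(k . x) by multiplication with e^{-t|k|^{2 alpha}}.\<close>
definition frac_heat :: "real \<Rightarrow> real \<Rightarrow> (vec3 \<times> vec3) list \<Rightarrow> (vec3 \<times> vec3) list" where
  "frac_heat \<alpha> t ps = map (\<lambda>(a, k). (exp (- t * norm k powr (2 * \<alpha>)) *\<^sub>R a, k)) ps"

definition Linf_norm :: "(vec3 \<Rightarrow> vec3) \<Rightarrow> ereal" where
  "Linf_norm f = (SUP x. ereal (norm (f x)))"

text \<open>Homogeneous Besov norm of negative order -s (s > 0), via the fractional heat semigroup
  with fixed parameter alpha > 0:
  sup_{t>0} t^{s/(2 alpha)} || e^{-t(-Delta)^alpha} f ||_{L^infty}.\<close>
definition besov_neg :: "real \<Rightarrow> real \<Rightarrow> (vec3 \<times> vec3) list \<Rightarrow> ereal" where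
  "besov_neg \<alpha> s ps =
     (SUP t \<in> {0<..}. ereal (t powr (s / (2 * \<alpha>))) * Linf_norm (trig (frac_heat \<alpha> t ps)))"

definition zeta :: vec3 where "zeta = vector [1, 0, 0]"
definition eta :: vec3 where "eta = vector [0, 0, 1]"
definition vv :: vec3 where "vv = vector [0, 0, 1]"
definition vv' :: vec3 where "vv' = vector [0, 1, 0]"

definition kk :: "nat \<Rightarrow> nat \<Rightarrow> vec3" where
  "kk K i = (2 ^ (i - 1) * real K) *\<^sub>R zeta"

definition kk' :: "nat \<Rightarrow> nat \<Rightarrow> vec3" where
  "kk' K i = kk K i + eta"

definition u0_modes :: "nat \<Rightarrow> nat \<Rightarrow> real \<Rightarrow> real \<Rightarrow> (vec3 \<times> vec3) list" where
  "u0_modes r K \<beta>1 \<theta>1 =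
     map (\<lambda>i. ((real r powr (- \<beta>1) * norm (kk K i) powr \<theta>1) *\<^sub>R vv, kk K i)) [1..<r+1]"

definition b0_modes :: "nat \<Rightarrow> nat \<Rightarrow> real \<Rightarrow> real \<Rightarrow> (vec3 \<times> vec3) list" where
  "b0_modes r K \<beta>2 \<theta>2 =
     map (\<lambda>i. ((real r powr (- \<beta>2) * norm (kk' K i) powr \<theta>2) *\<^sub>R vv', kk' K i)) [1..<r+1]"

lemma trig_u0: "trig (u0_modes r K \<beta>1 \<theta>1) y =
   (\<Sum>i=1..r. (real r powr (- \<beta>1) * norm (kk K i) powr \<theta>1 * cos (kk K i \<bullet> y)) *\<^sub>R vv)"
  unfolding trig_def u0_modes_def
  apply (simp add: o_def case_prod_unfold sum_list_distinct_conv_sum_set atLeastLessThanSuc_atLeastAtMost mult.commute)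
  by (rule sum.cong, auto)

end

theory Submission
  imports Defs
begin

lemma exp_ge_pow: "(y::real) \<ge> 0 \<Longrightarrow> y^n \<le> fact n * exp y"
proof -
  assume y: "y \<ge> 0"
  have s: "(\<lambda>n. y^n /\<^sub>R fact n) sums exp y" by (rule exp_converges)
  have "y^n /\<^sub>R fact n \<le> exp y"
    by (rule sums_le[OF _ sums_single[of n "\<lambda>n. y^n /\<^sub>R fact n"] s]) (simp add: y)
  then show ?thesis by (simp add: divide_simps mult.commute)
qed

lemma powr_le_exp:
  assumes c: "(c::real) > 0"
  shows "\<exists>D>0. \<forall>y\<ge>0. y powr c \<le> D * exp y"
proof -
  define n where "n = nat \<lceil>c\<rceil>"
  have cn: "c \<le> real n" unfolding n_def by linarith
  have "\<forall>y\<ge>0. y powr c \<le> (1 + fact n) * exp y"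
  proof (intro allI impI)
    fix y :: real assume y: "y \<ge> 0"
    have e1: "1 \<le> exp y" using y by simp
    have f0: "(0::real) \<le> fact n" by simp
    show "y powr c \<le> (1 + fact n) * exp y"
    proof (cases "y \<le> 1")
      case True
      have "y powr c \<le> 1" using True y c by (simp add: powr_le1)
      also have "1 \<le> (1 + fact n) * exp y"
      proof -
        have "1 * 1 \<le> (1 + fact n) * exp y" using e1 f0 by (intro mult_mono) auto
        then show ?thesis by simp
      qed
      finally show ?thesis .
    next
      case False
      then have y1: "y \<ge> 1" by simp
      have "y powr c \<le> y powr real n" using y1 cn by (simp add: powr_mono)
      also have "\<dots> = y ^ n" using y1 by (simp add: powr_realpow)
      also have "\<dots> \<le> fact n * exp y" using exp_ge_pow y by blast
      also have "\<dots> \<le> (1 + fact n) * exp y" by simp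
      finally show ?thesis .
    qed
  qed
  moreover have "(1 + fact n :: real) > 0" by (simp add: add_pos_pos)
  ultimately show ?thesis by blast
qed

lemma lemA:
  assumes a: "(\<alpha>::real) > 0" and th: "(\<theta>::real) > 0"
  shows "\<exists>C>0. \<forall>\<mu>>0. (1 + \<mu> powr \<theta>)^2 \<le> C * exp (\<mu> powr (2*\<alpha>))"
proof -
  obtain D where D: "D > 0" "\<forall>y\<ge>0. y powr (\<theta>/\<alpha>) \<le> D * exp y"
    using powr_le_exp[of "\<theta>/\<alpha>"] a th by auto
  have "\<forall>\<mu>>0. (1 + \<mu> powr \<theta>)^2 \<le> (2 + 2*D) * exp (\<mu> powr (2*\<alpha>))"
  proof (intro allI impI)
    fix \<mu> :: real assume m: "\<mu> > 0"
    define y where "y = \<mu> powr (2*\<alpha>)"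
    have y0: "y \<ge> 0" unfolding y_def by simp
    have "(\<mu> powr \<theta>)^2 = \<mu> powr (2*\<theta>)" using m by (simp add: powr_realpow[symmetric] powr_powr mult.commute)
    also have "\<dots> = y powr (\<theta>/\<alpha>)" unfolding y_def using a by (simp add: powr_powr)
    finally have z2: "(\<mu> powr \<theta>)^2 \<le> D * exp y" using D y0 by simp
    have sq: "0 \<le> (\<mu> powr \<theta> - 1)^2" by simp
    have "(1 + \<mu> powr \<theta>)^2 \<le> 2 + 2 * (\<mu> powr \<theta>)^2"
      using sq by (simp add: power2_eq_square algebra_simps)
    also have "\<dots> \<le> 2 * exp y + 2 * (D * exp y)"
    proof -
      have "1 \<le> exp y" using y0 by simp
      then show ?thesis using z2 by linarith
    qed
    finally show "(1 + \<mu> powr \<theta>)^2 \<le> (2 + 2*D) * exp (\<mu> powr (2*\<alpha>))"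
      unfolding y_def by (simp add: algebra_simps)
  qed
  moreover have "2 + 2*D > 0" using D by simp
  ultimately show ?thesis by blast
qed

lemma tele:
  assumes q: "(q::real) > 1" and x: "x \<ge> 0"
  shows "x/(1+x)^2 \<le> q/(q-1) * ((q*x)/(1+q*x) - x/(1+x))"
proof -
  have d1: "1+q*x > 0" using q x by (simp add: add_pos_nonneg)
  have d2: "1+x > 0" using x by simp
  have e1: "(q*x)/(1+q*x) - x/(1+x) = (q-1)*x/((1+q*x)*(1+x))"
    using d1 d2 by (simp add: field_simps)
  have eq: "q/(q-1) * ((q*x)/(1+q*x) - x/(1+x)) = q*x/((1+q*x)*(1+x))"
    unfolding e1 using q by simp
  have "(1+q*x) \<le> q*(1+x)" using q by (simp add: algebra_simps)
  then have le: "(1+q*x)*(1+x) \<le> q*(1+x)*(1+x)" using d2 by (intro mult_right_mono) auto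
  have "x/(1+x)^2 = (q*x)/(q*(1+x)*(1+x))" using q by (simp add: power2_eq_square)
  also have "\<dots> \<le> q*x/((1+q*x)*(1+x))"
    by (rule frac_le) (use q x d1 d2 le in auto)
  finally have "x/(1+x)^2 \<le> q*x/((1+q*x)*(1+x))" .
  with eq show ?thesis by simp
qed

lemma core:
  assumes a: "(\<alpha>::real) > 0" and th: "(\<theta>::real) > 0"
  shows "\<exists>C. \<forall>(m::real) (lam::nat \<Rightarrow> real) (r::nat). m > 0 \<longrightarrow>
     (\<forall>i<r. m*2^i \<le> lam i \<and> lam i \<le> 2*(m*2^i)) \<longrightarrow>
     (\<Sum>i<r. lam i powr \<theta> * exp (- (lam i powr (2*\<alpha>)))) \<le> C"
proof -
  obtain C1 where C1: "C1 > 0" "\<forall>\<mu>>0. (1 + \<mu> powr \<theta>)^2 \<le> C1 * exp (\<mu> powr (2*\<alpha>))"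
    using lemA[OF a th] by blast
  define q where "q = (2::real) powr \<theta>"
  have q1: "q > 1" unfolding q_def using th by simp
  define \<phi> where "\<phi> = (\<lambda>x::real. x/(1+x))"
  define K where "K = q * C1 * (q/(q-1))"
  have K0: "K \<ge> 0" unfolding K_def using q1 C1 by simp
  have "\<forall>(m::real) (lam::nat \<Rightarrow> real) (r::nat). m > 0 \<longrightarrow>
     (\<forall>i<r. m*2^i \<le> lam i \<and> lam i \<le> 2*(m*2^i)) \<longrightarrow>
     (\<Sum>i<r. lam i powr \<theta> * exp (- (lam i powr (2*\<alpha>)))) \<le> K"
  proof (intro allI impI)
    fix m :: real and lam :: "nat \<Rightarrow> real" and r :: nat
    assume m: "m > 0" and bd: "\<forall>i<r. m*2^i \<le> lam i \<and> lam i \<le> 2*(m*2^i)"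
    define x where "x = (\<lambda>i::nat. (m*2^i) powr \<theta>)"
    have xS: "x (Suc i) = q * x i" for i
      unfolding x_def q_def using m by (simp add: powr_mult mult_ac)
    have x0: "x i \<ge> 0" for i unfolding x_def by simp
    have tm: "lam i powr \<theta> * exp (- (lam i powr (2*\<alpha>))) \<le> K * (\<phi> (x (Suc i)) - \<phi> (x i))"
      if i: "i < r" for i
    proof -
      define \<mu> where "\<mu> = m*2^i"
      have mu: "\<mu> > 0" unfolding \<mu>_def using m by simp
      have l1: "\<mu> \<le> lam i" and l2: "lam i \<le> 2*\<mu>" using bd i unfolding \<mu>_def by auto
      have lp: "lam i > 0" using mu l1 by linarith
      have "lam i powr \<theta> \<le> (2*\<mu>) powr \<theta>" using l2 lp th by (intro powr_mono2) auto
      also have "\<dots> = q * \<mu> powr \<theta>" unfolding q_def using mu by (simp add: powr_mult)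
      finally have A1: "lam i powr \<theta> \<le> q * \<mu> powr \<theta>" .
      have "\<mu> powr (2*\<alpha>) \<le> lam i powr (2*\<alpha>)" using l1 mu a by (intro powr_mono2) auto
      then have A2: "exp (- (lam i powr (2*\<alpha>))) \<le> exp (- (\<mu> powr (2*\<alpha>)))" by simp
      have S1: "lam i powr \<theta> * exp (- (lam i powr (2*\<alpha>))) \<le> q * \<mu> powr \<theta> * exp (- (\<mu> powr (2*\<alpha>)))"
        using A1 A2 q1 by (intro mult_mono) auto
      have S2: "\<mu> powr \<theta> * exp (- (\<mu> powr (2*\<alpha>))) \<le> C1 * (x i / (1 + x i)^2)"
      proof -
        have xi: "x i = \<mu> powr \<theta>" unfolding x_def \<mu>_def ..
        have B: "(1 + x i)^2 \<le> C1 * exp (\<mu> powr (2*\<alpha>))" using C1 mu xi by simp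
        have pos: "(1 + x i)^2 > 0" using x0[of i] by (simp add: add_pos_nonneg)
        have "x i * exp (- (\<mu> powr (2*\<alpha>))) = x i / exp (\<mu> powr (2*\<alpha>))" by (simp add: exp_minus divide_inverse)
        also have "\<dots> \<le> C1 * (x i / (1 + x i)^2)"
        proof -
          have "x i * (1 + x i)^2 \<le> x i * (C1 * exp (\<mu> powr (2*\<alpha>)))"
            using B x0[of i] by (intro mult_left_mono) auto
          then show ?thesis using pos by (simp add: field_simps)
        qed
        finally show ?thesis using xi by simp
      qed
      have "q * (\<mu> powr \<theta> * exp (- (\<mu> powr (2*\<alpha>)))) \<le> q * (C1 * (x i / (1 + x i)^2))"
        using q1 S2 by (intro mult_left_mono) auto
      then have "lam i powr \<theta> * exp (- (lam i powr (2*\<alpha>))) \<le> q * (C1 * (x i / (1 + x i)^2))"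
        using S1 by (simp add: mult.assoc)
      also have "\<dots> \<le> q * (C1 * (q/(q-1) * (\<phi> (x (Suc i)) - \<phi> (x i))))"
        using tele[OF q1 x0[of i]] q1 C1 unfolding \<phi>_def xS by (intro mult_left_mono) auto
      also have "\<dots> = K * (\<phi> (x (Suc i)) - \<phi> (x i))" unfolding K_def by simp
      finally show ?thesis .
    qed
    have "(\<Sum>i<r. lam i powr \<theta> * exp (- (lam i powr (2*\<alpha>)))) \<le> (\<Sum>i<r. K * (\<phi> (x (Suc i)) - \<phi> (x i)))"
      using tm by (intro sum_mono) auto
    also have "\<dots> = K * (\<phi> (x r) - \<phi> (x 0))"
      using sum_lessThan_telescope[of "\<lambda>i. \<phi> (x i)" r] by (simp add: sum_distrib_left[symmetric])
    also have "\<dots> \<le> K * 1"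
    proof -
      have "\<phi> (x r) \<le> 1" unfolding \<phi>_def using x0[of r] by simp
      moreover have "\<phi> (x 0) \<ge> 0" unfolding \<phi>_def using x0[of 0] by simp
      ultimately show ?thesis using K0 by (intro mult_left_mono) auto
    qed
    finally show "(\<Sum>i<r. lam i powr \<theta> * exp (- (lam i powr (2*\<alpha>)))) \<le> K" by simp
  qed
  then show ?thesis by blast
qed


lemma trig_frac:
  "trig (frac_heat \<alpha> t (map (\<lambda>i. (c i *\<^sub>R w, k i)) [1..<r+1])) x =
   (\<Sum>i=1..r. (exp (- t * norm (k i) powr (2*\<alpha>)) * c i * cos (k i \<bullet> x)) *\<^sub>R w)"
  unfolding trig_def frac_heat_def
  apply (simp add: o_def case_prod_unfold sum_list_distinct_conv_sum_set atLeastLessThanSuc_atLeastAtMost mult.commute)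
  by (rule sum.cong, auto simp: mult_ac)

lemma besov_gen:
  assumes w: "norm w = 1" and c: "\<And>i. c i \<ge> 0"
    and B: "\<And>t. t > 0 \<Longrightarrow> t powr (s/(2*\<alpha>)) * (\<Sum>i=1..r. exp (- t * norm (k i) powr (2*\<alpha>)) * c i) \<le> B"
  shows "besov_neg \<alpha> s (map (\<lambda>i. (c i *\<^sub>R w, k i)) [1..<r+1]) \<le> ereal B"
  unfolding besov_neg_def
proof (rule SUP_least)
  fix t :: real assume "t \<in> {0<..}"
  then have t: "t > 0" by simp
  define S where "S = (\<Sum>i=1..r. exp (- t * norm (k i) powr (2*\<alpha>)) * c i)"
  have L: "Linf_norm (trig (frac_heat \<alpha> t (map (\<lambda>i. (c i *\<^sub>R w, k i)) [1..<r+1]))) \<le> ereal S"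
    unfolding Linf_norm_def
  proof (rule SUP_least)
    fix x
    have "norm (trig (frac_heat \<alpha> t (map (\<lambda>i. (c i *\<^sub>R w, k i)) [1..<r+1])) x)
       \<le> (\<Sum>i=1..r. norm ((exp (- t * norm (k i) powr (2*\<alpha>)) * c i * cos (k i \<bullet> x)) *\<^sub>R w))"
      unfolding trig_frac by (rule norm_sum)
    also have "\<dots> \<le> S" unfolding S_def
    proof (rule sum_mono)
      fix i
      have "\<bar>cos (k i \<bullet> x)\<bar> \<le> 1" by simp
      then have "\<bar>exp (- t * norm (k i) powr (2*\<alpha>)) * c i\<bar> * \<bar>cos (k i \<bullet> x)\<bar> \<le> \<bar>exp (- t * norm (k i) powr (2*\<alpha>)) * c i\<bar> * 1"
        by (intro mult_left_mono) auto
      then show "norm ((exp (- t * norm (k i) powr (2*\<alpha>)) * c i * cos (k i \<bullet> x)) *\<^sub>R w) \<le> exp (- t * norm (k i) powr (2*\<alpha>)) * c i"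
        using w c[of i] by (simp add: abs_mult)
    qed
    finally show "ereal (norm (trig (frac_heat \<alpha> t (map (\<lambda>i. (c i *\<^sub>R w, k i)) [1..<r+1])) x)) \<le> ereal S" by simp
  qed
  have "ereal (t powr (s/(2*\<alpha>))) * Linf_norm (trig (frac_heat \<alpha> t (map (\<lambda>i. (c i *\<^sub>R w, k i)) [1..<r+1])))
      \<le> ereal (t powr (s/(2*\<alpha>))) * ereal S"
    using L by (intro ereal_mult_left_mono) auto
  also have "\<dots> = ereal (t powr (s/(2*\<alpha>)) * S)" by simp
  also have "\<dots> \<le> ereal B" using B[OF t] unfolding S_def by simp
  finally show "ereal (t powr (s/(2*\<alpha>))) * Linf_norm (trig (frac_heat \<alpha> t (map (\<lambda>i. (c i *\<^sub>R w, k i)) [1..<r+1]))) \<le> ereal B" .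
qed

lemma term_id:
  fixes t \<alpha> n \<theta> \<rho> :: real
  assumes t: "t > 0" and a: "\<alpha> > 0" and n: "n \<ge> 0"
  shows "t powr (\<theta>/(2*\<alpha>)) * (exp (- t * n powr (2*\<alpha>)) * (\<rho> * n powr \<theta>)) =
    \<rho> * ((t powr (1/(2*\<alpha>)) * n) powr \<theta> * exp (- ((t powr (1/(2*\<alpha>)) * n) powr (2*\<alpha>))))"
proof -
  have e1: "(t powr (1/(2*\<alpha>)) * n) powr \<theta> = t powr (\<theta>/(2*\<alpha>)) * n powr \<theta>"
    using t n by (simp add: powr_mult powr_powr)
  have e2: "(t powr (1/(2*\<alpha>)) * n) powr (2*\<alpha>) = t * n powr (2*\<alpha>)"
    using t n a by (simp add: powr_mult powr_powr)
  show ?thesis unfolding e1 e2 minus_mult_left by (simp only: mult_ac)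
qed

lemma sum_shift1: "(\<Sum>i=1..r. f i) = (\<Sum>i<r. f (Suc i :: nat))"
  by (induct r) auto

lemma zz: "zeta \<bullet> zeta = 1"
  by (simp add: zeta_def inner_vec_def sum_3)
lemma ze: "zeta \<bullet> eta = 0"
  by (simp add: zeta_def eta_def inner_vec_def sum_3)
lemma ee: "eta \<bullet> eta = 1"
  by (simp add: eta_def inner_vec_def sum_3)
lemma zeta_inner: "zeta \<bullet> zeta = 1" "zeta \<bullet> eta = 0" "eta \<bullet> eta = 1" "eta \<bullet> zeta = 0"
  using zz ze ee by (auto simp: inner_commute)
lemma vv1: "norm vv = 1"
  by (simp add: vv_def norm_eq_sqrt_inner inner_vec_def sum_3)
lemma vv2: "norm vv' = 1"
  by (simp add: vv'_def norm_eq_sqrt_inner inner_vec_def sum_3)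

lemma norm_zeta: "norm zeta = 1"
  by (simp add: norm_eq_sqrt_inner zeta_inner)

lemma norm_kk: "norm (kk K i) = 2^(i-1) * real K"
  unfolding kk_def norm_scaleR norm_zeta by simp

lemma inner_ze: "(a *\<^sub>R zeta + eta) \<bullet> (a *\<^sub>R zeta + eta) = a^2 + 1"
  by (simp add: inner_add_left inner_add_right zeta_inner power2_eq_square)

lemma norm_kk': "norm (kk' K i) = sqrt ((2^(i-1) * real K)^2 + 1)"
  unfolding kk'_def kk_def norm_eq_sqrt_inner inner_ze ..


lemma main_gen:
  fixes \<alpha> \<theta> \<rho> C m0 :: real and k :: "nat \<Rightarrow> vec3" and w :: vec3
  assumes a: "\<alpha> > 0" and w: "norm w = 1" and rho: "\<rho> \<ge> 0" and m0: "m0 > 0"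
    and C: "\<forall>(m::real) (lam::nat \<Rightarrow> real) (r::nat). m > 0 \<longrightarrow>
     (\<forall>i<r. m*2^i \<le> lam i \<and> lam i \<le> 2*(m*2^i)) \<longrightarrow>
     (\<Sum>i<r. lam i powr \<theta> * exp (- (lam i powr (2*\<alpha>)))) \<le> C"
    and kb: "\<And>i. m0*2^i \<le> norm (k (Suc i)) \<and> norm (k (Suc i)) \<le> 2*(m0*2^i)"
  shows "besov_neg \<alpha> \<theta> (map (\<lambda>i. ((\<rho> * norm (k i) powr \<theta>) *\<^sub>R w, k i)) [1..<r+1]) \<le> ereal (\<rho> * C)"
proof (rule besov_gen[OF w])
  fix i show "0 \<le> \<rho> * norm (k i) powr \<theta>" using rho by simp
next
  fix t :: real assume t: "t > 0"
  define \<tau> where "\<tau> = t powr (1/(2*\<alpha>))"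
  have tau: "\<tau> > 0" unfolding \<tau>_def using t by simp
  have "t powr (\<theta>/(2*\<alpha>)) * (\<Sum>i=1..r. exp (- t * norm (k i) powr (2*\<alpha>)) * (\<rho> * norm (k i) powr \<theta>))
      = (\<Sum>i=1..r. t powr (\<theta>/(2*\<alpha>)) * (exp (- t * norm (k i) powr (2*\<alpha>)) * (\<rho> * norm (k i) powr \<theta>)))"
    by (rule sum_distrib_left)
  also have "\<dots> = (\<Sum>i=1..r. \<rho> * ((\<tau> * norm (k i)) powr \<theta> * exp (- ((\<tau> * norm (k i)) powr (2*\<alpha>)))))"
    unfolding \<tau>_def by (rule sum.cong[OF refl], rule term_id[OF t a]) simp
  also have "\<dots> = \<rho> * (\<Sum>i<r. (\<tau> * norm (k (Suc i))) powr \<theta> * exp (- ((\<tau> * norm (k (Suc i))) powr (2*\<alpha>))))"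
    unfolding sum_distrib_left[symmetric] sum_shift1 ..
  also have "\<dots> \<le> \<rho> * C"
  proof (rule mult_left_mono[OF _ rho])
    have B1: "\<forall>i<r. (\<tau>*m0)*2^i \<le> \<tau> * norm (k (Suc i)) \<and> \<tau> * norm (k (Suc i)) \<le> 2*((\<tau>*m0)*2^i)"
    proof (intro allI impI conjI)
      fix i
      have "\<tau> * (m0*2^i) \<le> \<tau> * norm (k (Suc i))" using kb[of i] tau by (intro mult_left_mono) auto
      then show "(\<tau>*m0)*2^i \<le> \<tau> * norm (k (Suc i))" by (simp add: mult_ac)
      have "\<tau> * norm (k (Suc i)) \<le> \<tau> * (2*(m0*2^i))" using kb[of i] tau by (intro mult_left_mono) auto
      then show "\<tau> * norm (k (Suc i)) \<le> 2*((\<tau>*m0)*2^i)" by (simp add: mult_ac)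
    qed
    have B2: "\<tau>*m0 > 0" using tau m0 by simp
    show "(\<Sum>i<r. (\<tau> * norm (k (Suc i))) powr \<theta> * exp (- ((\<tau> * norm (k (Suc i))) powr (2*\<alpha>)))) \<le> C"
      using mp[OF mp[OF spec[OF spec[OF spec[OF C, of "\<tau>*m0"], of "\<lambda>i. \<tau> * norm (k (Suc i))"], of r] B2] B1] by simp
  qed
  finally show "t powr (\<theta>/(2*\<alpha>)) * (\<Sum>i=1..r. exp (- t * norm (k i) powr (2*\<alpha>)) * (\<rho> * norm (k i) powr \<theta>)) \<le> \<rho> * C" .
qed

lemma kk_bounds: "K \<ge> 1 \<Longrightarrow> real K*2^i \<le> norm (kk K (Suc i)) \<and> norm (kk K (Suc i)) \<le> 2*(real K*2^i)"
proof -
  assume "K \<ge> 1"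
  have "norm (kk K (Suc i)) = real K * 2^i" unfolding norm_kk by (simp only: diff_Suc_1 mult.commute)
  moreover have "(0::real) \<le> real K * 2^i" by simp
  ultimately show ?thesis by linarith
qed

lemma kk'_bounds: assumes K: "K \<ge> 1"
  shows "real K*2^i \<le> norm (kk' K (Suc i)) \<and> norm (kk' K (Suc i)) \<le> 2*(real K*2^i)"
proof -
  define a where "a = real K * 2^i"
  have K1: "(1::real) \<le> real K" using K by simp
  have p1: "(1::real) \<le> 2^i" by simp
  have "(1::real)*1 \<le> real K * 2^i" using K1 p1 by (intro mult_mono) auto
  then have a1: "a \<ge> 1" unfolding a_def by simp
  have n: "norm (kk' K (Suc i)) = sqrt (a^2 + 1)" unfolding norm_kk' a_def by (simp only: diff_Suc_1 mult.commute)
  have "a \<le> sqrt (a^2+1)" by (rule real_le_rsqrt) simp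
  moreover have "sqrt (a^2+1) \<le> 2*a"
  proof -
    have "1*1 \<le> a*a" using a1 by (intro mult_mono) auto
    then have "a^2+1 \<le> (2*a)^2" by (simp add: power2_eq_square)
    then have "sqrt (a^2+1) \<le> sqrt ((2*a)^2)" by (rule real_sqrt_le_mono)
    also have "\<dots> = 2*a" using a1 by (simp only: real_sqrt_abs)
    finally show ?thesis .
  qed
  ultimately show ?thesis unfolding n a_def by simp
qed

theorem lemma4p2:
  fixes \<alpha> \<beta>1 \<beta>2 \<theta>1 \<theta>2 :: real
  assumes "\<alpha> > 0" "\<beta>1 > 0" "\<beta>2 > 0" "\<theta>1 > 0" "\<theta>2 > 0"
  shows "\<exists>C. \<forall>r K :: nat. r \<ge> 1 \<longrightarrow> K \<ge> 1 \<longrightarrow>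
           besov_neg \<alpha> \<theta>1 (u0_modes r K \<beta>1 \<theta>1) \<le> ereal (C * real r powr (- \<beta>1)) \<and>
           besov_neg \<alpha> \<theta>2 (b0_modes r K \<beta>2 \<theta>2) \<le> ereal (C * real r powr (- \<beta>2))"
proof -
  obtain C1 where C1: "\<forall>(m::real) (lam::nat \<Rightarrow> real) (r::nat). m > 0 \<longrightarrow>
     (\<forall>i<r. m*2^i \<le> lam i \<and> lam i \<le> 2*(m*2^i)) \<longrightarrow>
     (\<Sum>i<r. lam i powr \<theta>1 * exp (- (lam i powr (2*\<alpha>)))) \<le> C1"
    using core[OF assms(1) assms(4)] by blast
  obtain C2 where C2: "\<forall>(m::real) (lam::nat \<Rightarrow> real) (r::nat). m > 0 \<longrightarrow>
     (\<forall>i<r. m*2^i \<le> lam i \<and> lam i \<le> 2*(m*2^i)) \<longrightarrow>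
     (\<Sum>i<r. lam i powr \<theta>2 * exp (- (lam i powr (2*\<alpha>)))) \<le> C2"
    using core[OF assms(1) assms(5)] by blast
  show ?thesis
  proof (intro exI[of _ "max C1 C2"] allI impI conjI)
    fix r K :: nat assume r: "r \<ge> 1" and K: "K \<ge> 1"
    have m0: "real K > 0" using K by simp
    have "besov_neg \<alpha> \<theta>1 (u0_modes r K \<beta>1 \<theta>1) \<le> ereal (real r powr (- \<beta>1) * C1)"
      unfolding u0_modes_def
      by (rule main_gen[OF assms(1) vv1 _ m0 C1]) (use kk_bounds[OF K] in auto)
    also have "\<dots> \<le> ereal (max C1 C2 * real r powr (- \<beta>1))"
      by (simp add: mult.commute mult_right_mono)
    finally show "besov_neg \<alpha> \<theta>1 (u0_modes r K \<beta>1 \<theta>1) \<le> ereal (max C1 C2 * real r powr (- \<beta>1))" .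
    have "besov_neg \<alpha> \<theta>2 (b0_modes r K \<beta>2 \<theta>2) \<le> ereal (real r powr (- \<beta>2) * C2)"
      unfolding b0_modes_def
      by (rule main_gen[OF assms(1) vv2 _ m0 C2]) (use kk'_bounds[OF K] in auto)
    also have "\<dots> \<le> ereal (max C1 C2 * real r powr (- \<beta>2))"
      by (simp add: mult.commute mult_right_mono)
    finally show "besov_neg \<alpha> \<theta>2 (b0_modes r K \<beta>2 \<theta>2) \<le> ereal (max C1 C2 * real r powr (- \<beta>2))" .
  qed
qed

end
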